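(* Let $\mathcal{A}$ be a separating union-closed family with base set $[n]$ and height $h=4$, and suppose $|\mathcal{B}(\mathcal{A})|=3$. Let $B=b(\mathcal{A}_{<n/2})$. Then $|B| \in \{n-1, n\}$.
   Context: A family of sets $\mathcal{A}$ is union-closed if it is a finite family of distinct finite sets with at least one nonempty member set, and $X,Y\in\mathcal{A}$ implies $X\cup Y\in\mathcal{A}$ (the empty set may be a member). For a family $\mathcal{F}$, $b(\mathcal{F})=\bigcup_{F\in\mathcal{F}}F$; the base set $b(\mathcal{A})$ is denoted $[n]=\{1,\dots,n\}$. $\mathcal{A}$ is separating if for any two distinct $x,y\in[n]$ there is $A\in\mathcal{A}$ containing exactly one of $x,y$. A chain in $\mathcal{A}$ is a subfamily any two distinct members of which are comparable under proper inclusion; the height $h$ of $\mathcal{A}$ is the maximum size of a chain in $\mathcal{A}$. For real $x\ge 0$, $\mathcal{A}_{<x}=\{A\in\mathcal{A} : |A|<x\}$. For $\mathcal{S}\subseteq\mathcal{A}$ and $S\in\mathcal{S}$, $\mathrm{irr}_{\mathcal{S}}(S)=\{s\in S : s\notin b(\mathcal{S}\setminus\{S\})\}$, and $\mathcal{S}$ is irredundant if $\mathrm{irr}_{\mathcal{S}}(S)\neq\emptyset$ for every $S\in\mathcal{S}$. With $B=b(\mathcal{A}_{<n/2})$, $\mathcal{B}(\mathcal{A})$ denotes any irredundant subfamily of $\mathcal{A}_{<n/2}$ of minimum size such that $b(\mathcal{B}(\mathcal{A}))=B$. *)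

theory Defs
  imports Complex_Main
begin

definition union_closed :: "'a set set \<Rightarrow> bool" where
  "union_closed \<A> \<longleftrightarrow> finite \<A> \<and> (\<forall>X\<in>\<A>. finite X) \<and> (\<exists>X\<in>\<A>. X \<noteq> {})
     \<and> (\<forall>X\<in>\<A>. \<forall>Y\<in>\<A>. X \<union> Y \<in> \<A>)"

definition separating :: "'a set set \<Rightarrow> bool" where
  "separating \<A> \<longleftrightarrow> (\<forall>x\<in>\<Union>\<A>. \<forall>y\<in>\<Union>\<A>. x \<noteq> y \<longrightarrow>
     (\<exists>A\<in>\<A>. (x \<in> A \<and> y \<notin> A) \<or> (y \<in> A \<and> x \<notin> A)))"

definition is_chain :: "'a set set \<Rightarrow> bool" where
  "is_chain \<C> \<longleftrightarrow> (\<forall>X\<in>\<C>. \<forall>Y\<in>\<C>. X \<noteq> Y \<longrightarrow> X \<subset> Y \<or> Y \<subset> X)"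

definition height :: "'a set set \<Rightarrow> nat" where
  "height \<A> = Max (card ` {\<C>. \<C> \<subseteq> \<A> \<and> is_chain \<C>})"

definition below :: "'a set set \<Rightarrow> real \<Rightarrow> 'a set set" where
  "below \<A> x = {A\<in>\<A>. real (card A) < x}"

definition irr :: "'a set set \<Rightarrow> 'a set \<Rightarrow> 'a set" where
  "irr \<S> S = {s\<in>S. s \<notin> \<Union>(\<S> - {S})}"

definition irredundant :: "'a set set \<Rightarrow> bool" where
  "irredundant \<S> \<longleftrightarrow> (\<forall>S\<in>\<S>. irr \<S> S \<noteq> {})"

definition small_base :: "'a set set \<Rightarrow> nat \<Rightarrow> 'a set" where
  "small_base \<A> n = \<Union>(below \<A> (real n / 2))"

definition calB_size :: "'a set set \<Rightarrow> nat \<Rightarrow> nat" where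
  "calB_size \<A> n = (LEAST k. \<exists>\<S>. \<S> \<subseteq> below \<A> (real n / 2) \<and> irredundant \<S>
      \<and> \<Union>\<S> = small_base \<A> n \<and> card \<S> = k)"

end

theory Submission
  imports Defs
begin

lemma exists_irr:
  assumes fin: "finite F"
  shows "\<exists>S. S \<subseteq> F \<and> irredundant S \<and> \<Union>S = \<Union>F"
proof -
  define P where "P k \<longleftrightarrow> (\<exists>S. S \<subseteq> F \<and> \<Union>S = \<Union>F \<and> card S = k)" for k
  have "P (card F)" unfolding P_def by blast
  then have "P (LEAST k. P k)" by (rule LeastI)
  then obtain S where S: "S \<subseteq> F" "\<Union>S = \<Union>F" "card S = (LEAST k. P k)"
    unfolding P_def by blast
  have finS: "finite S" using S(1) fin finite_subset by blast
  have "irredundant S"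
    unfolding irredundant_def
  proof
    fix T assume T: "T \<in> S"
    show "irr S T \<noteq> {}"
    proof
      assume e: "irr S T = {}"
      have "T \<subseteq> \<Union>(S - {T})"
      proof
        fix t assume "t \<in> T"
        then have "t \<notin> irr S T" using e by simp
        then show "t \<in> \<Union>(S - {T})" using \<open>t \<in> T\<close> unfolding irr_def by simp
      qed
      then have "\<Union>(S - {T}) = \<Union>S" using T by auto
      then have u: "\<Union>(S - {T}) = \<Union>F" using S(2) by simp
      have "S - {T} \<subseteq> F" using S(1) by auto
      then have "P (card (S - {T}))" unfolding P_def using u by blast
      then have "(LEAST k. P k) \<le> card (S - {T})" by (rule Least_le)
      moreover have "card (S - {T}) < card S" using finS T by (meson card_Diff1_less)
      ultimately show False using S(3) by simp
    qed
  qed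
  then show ?thesis using S by blast
qed

theorem propositionF:
  fixes \<A> :: "nat set set" and n :: nat
  assumes "union_closed \<A>"
    and "\<Union>\<A> = {1..n}"
    and "separating \<A>"
    and "height \<A> = 4"
    and "calB_size \<A> n = 3"
  shows "card (small_base \<A> n) \<in> {n - 1, n}"
proof -
  note uc = assms(1)[unfolded union_closed_def]
  define F where "F = below \<A> (real n / 2)"
  define B where "B = small_base \<A> n"
  have BF: "B = \<Union>F" unfolding B_def F_def small_base_def by simp
  have FA: "F \<subseteq> \<A>" unfolding F_def below_def by auto
  have finF: "finite F" using FA uc finite_subset by blast
  define Q where "Q k \<longleftrightarrow> (\<exists>\<S>. \<S> \<subseteq> F \<and> irredundant \<S> \<and> \<Union>\<S> = B \<and> card \<S> = k)" for k
  have "\<exists>k. Q k" using exists_irr[OF finF] unfolding Q_def BF by blast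
  then have "Q (LEAST k. Q k)" by (rule LeastI_ex)
  moreover have "(LEAST k. Q k) = 3" using assms(5)
    unfolding calB_size_def Q_def F_def B_def by simp
  ultimately obtain S where S: "S \<subseteq> F" "irredundant S" "\<Union>S = B" "card S = 3"
    unfolding Q_def by auto
  then obtain S1 S2 S3 where S123: "S = {S1, S2, S3}" "S1 \<noteq> S2" "S1 \<noteq> S3" "S2 \<noteq> S3"
    by (auto simp: numeral_3_eq_3 card_Suc_eq)
  have i2: "irr S S2 \<noteq> {}" and i3: "irr S S3 \<noteq> {}" using S(2) S123 unfolding irredundant_def by auto
  have A1: "S1 \<in> \<A>" and A2: "S2 \<in> \<A>" and A3: "S3 \<in> \<A>" using S(1) FA S123 by auto
  have c1: "S1 \<subset> S1 \<union> S2" using i2 S123 unfolding irr_def by auto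
  have c2: "S1 \<union> S2 \<subset> B" using i3 S123 S(3) unfolding irr_def by auto
  have A12: "S1 \<union> S2 \<in> \<A>" using uc A1 A2 by blast
  have AB: "B \<in> \<A>" using uc A12 A3 S(3) S123 by (metis Union_insert Union_empty sup_bot_right sup_assoc)
  have Bsub: "B \<subseteq> {1..n}" using AB assms(2) by blast
  have cardB: "card B \<le> n" using card_mono[OF _ Bsub] by simp
  have "n \<le> card B + 1"
  proof (rule ccontr)
    assume "\<not> ?thesis"
    then have "card ({1..n} - B) \<ge> 2" using Bsub by (simp add: card_Diff_subset finite_subset)
    then obtain x y where xy: "x \<in> {1..n} - B" "y \<in> {1..n} - B" "x \<noteq> y"
    proof -
      have "\<not> card ({1..n} - B) \<le> Suc 0" using \<open>card ({1..n} - B) \<ge> 2\<close> by simp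
      then have "\<not> (\<forall>a\<in>{1..n} - B. \<forall>b\<in>{1..n} - B. a = b)"
        using card_le_Suc0_iff_eq[of "{1..n} - B"] by auto
      then show ?thesis using that by blast
    qed
    then obtain A' where "A' \<in> \<A>" "(x \<in> A' \<and> y \<notin> A') \<or> (y \<in> A' \<and> x \<notin> A')"
    proof -
      have "x \<in> \<Union>\<A>" "y \<in> \<Union>\<A>" using xy assms(2) by auto
      then show ?thesis using that assms(3) xy(3) unfolding separating_def by blast
    qed
    then obtain u v A' where uv: "A' \<in> \<A>" "u \<in> A'" "v \<notin> A'" "u \<notin> B" "v \<notin> B" "v \<in> \<Union>\<A>"
      using xy assms(2) by blast
    obtain A'' where A'': "A'' \<in> \<A>" "v \<in> A''" using uv by blast
    define T4 where "T4 = B \<union> A'"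
    define T5 where "T5 = T4 \<union> A''"
    have c3: "B \<subset> T4" using uv unfolding T4_def by auto
    have c4: "T4 \<subset> T5" using uv A'' unfolding T4_def T5_def by auto
    have T4A: "T4 \<in> \<A>" using uc AB uv unfolding T4_def by blast
    have T5A: "T5 \<in> \<A>" using uc T4A A'' unfolding T5_def by blast
    define C where "C = {S1, S1 \<union> S2, B, T4, T5}"
    have CA: "C \<subseteq> \<A>" using A1 A12 AB T4A T5A unfolding C_def by auto
    have p: "S1 \<subset> S1 \<union> S2" "S1 \<subset> B" "S1 \<subset> T4" "S1 \<subset> T5"
      "S1 \<union> S2 \<subset> B" "S1 \<union> S2 \<subset> T4" "S1 \<union> S2 \<subset> T5"
      "B \<subset> T4" "B \<subset> T5" "T4 \<subset> T5"
      using c1 c2 c3 c4 by (meson psubset_trans)+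
    have chain: "is_chain C" unfolding is_chain_def C_def
      using p by blast
    have "card C = 5" unfolding C_def
      using p by (simp add: psubset_eq)
    moreover have "card C \<le> height \<A>" unfolding height_def
    proof (rule Max_ge)
      have "{\<C>. \<C> \<subseteq> \<A> \<and> is_chain \<C>} \<subseteq> Pow \<A>" by auto
      then show "finite (card ` {\<C>. \<C> \<subseteq> \<A> \<and> is_chain \<C>})"
        using uc finite_subset by (metis finite_Pow_iff finite_imageI)
      show "card C \<in> card ` {\<C>. \<C> \<subseteq> \<A> \<and> is_chain \<C>}" using CA chain by blast
    qed
    ultimately show False using assms(4) by simp
  qed
  then show ?thesis using cardB unfolding B_def by auto
qed

end
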